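(* Let $G$ be a finitely generated group hyperbolic relative to a finite collection $\mathcal P=\{P_\lambda\}_{\lambda\in\Lambda}$, $S$ a finite generating set, and $n\ge1$. Then the $G$-stabiliser of the barycentre of any simplex of the $n$-Rips complex $\Gamma_n^\blacktriangle$ that is not a vertex is finite.
   Context: Let $\Gamma$ be the Cayley graph of $G$ with respect to $S$, $V=G$, $W$ the set of cosets $gP_\lambda$. Relative hyperbolicity means the coned-off Cayley graph (vertex set $V\cup W$, edges of $\Gamma$ plus an edge $(v,w)$ whenever $v\in w$) is fine and $\delta$-hyperbolic. Extend $|\cdot,\cdot|_S$ to $V\cup W$ via distances in $\Gamma$ between the corresponding elements/cosets. $\Gamma_n$ has vertex set $V\cup W$ and an edge between $u\ne u'$ whenever $|u,u'|_S\le n$; $\Gamma_n^\blacktriangle$ is obtained by spanning simplices on all cliques of $\Gamma_n$, with $G$ acting by left multiplication. *)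

theory Defs
  imports "HOL-Algebra.Algebra"
begin

definition walk :: "('v \<Rightarrow> 'v \<Rightarrow> bool) \<Rightarrow> 'v list \<Rightarrow> bool" where
  "walk adj xs \<longleftrightarrow> xs \<noteq> [] \<and> (\<forall>i. Suc i < length xs \<longrightarrow> adj (xs ! i) (xs ! Suc i))"

definition graph_connected :: "'v set \<Rightarrow> ('v \<Rightarrow> 'v \<Rightarrow> bool) \<Rightarrow> bool" where
  "graph_connected Vs adj \<longleftrightarrow>
     (\<forall>x\<in>Vs. \<forall>y\<in>Vs. \<exists>xs. walk adj xs \<and> set xs \<subseteq> Vs \<and> hd xs = x \<and> last xs = y)"

definition gdist :: "'v set \<Rightarrow> ('v \<Rightarrow> 'v \<Rightarrow> bool) \<Rightarrow> 'v \<Rightarrow> 'v \<Rightarrow> nat" where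
  "gdist Vs adj x y = (LEAST n. \<exists>xs. walk adj xs \<and> set xs \<subseteq> Vs \<and> hd xs = x \<and> last xs = y
                                   \<and> length xs = Suc n)"

definition circuit :: "('v \<Rightarrow> 'v \<Rightarrow> bool) \<Rightarrow> 'v list \<Rightarrow> bool" where
  "circuit adj xs \<longleftrightarrow> length xs \<ge> 3 \<and> distinct xs \<and> walk adj xs \<and> adj (last xs) (hd xs)"

definition edge_in_circuit :: "'v \<Rightarrow> 'v \<Rightarrow> 'v list \<Rightarrow> bool" where
  "edge_in_circuit u v xs \<longleftrightarrow>
     (\<exists>i < length xs. {xs ! i, xs ! (Suc i mod length xs)} = {u, v})"

definition fine_graph :: "'v set \<Rightarrow> ('v \<Rightarrow> 'v \<Rightarrow> bool) \<Rightarrow> bool" where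
  "fine_graph Vs adj \<longleftrightarrow>
     (\<forall>u\<in>Vs. \<forall>v\<in>Vs. adj u v \<longrightarrow> (\<forall>n::nat.
        finite {xs. set xs \<subseteq> Vs \<and> circuit adj xs \<and> length xs = n \<and> edge_in_circuit u v xs}))"

definition gromov_product :: "'v set \<Rightarrow> ('v \<Rightarrow> 'v \<Rightarrow> bool) \<Rightarrow> 'v \<Rightarrow> 'v \<Rightarrow> 'v \<Rightarrow> real" where
  "gromov_product Vs adj w x y =
     (real (gdist Vs adj x w) + real (gdist Vs adj y w) - real (gdist Vs adj x y)) / 2"

definition hyperbolic_graph :: "'v set \<Rightarrow> ('v \<Rightarrow> 'v \<Rightarrow> bool) \<Rightarrow> real \<Rightarrow> bool" where
  "hyperbolic_graph Vs adj \<delta> \<longleftrightarrow> graph_connected Vs adj \<and>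
     (\<forall>w\<in>Vs. \<forall>x\<in>Vs. \<forall>y\<in>Vs. \<forall>z\<in>Vs.
        gromov_product Vs adj w x y \<ge>
          min (gromov_product Vs adj w x z) (gromov_product Vs adj w y z) - \<delta>)"

definition cayley_adj :: "('a, 'b) monoid_scheme \<Rightarrow> 'a set \<Rightarrow> 'a \<Rightarrow> 'a \<Rightarrow> bool" where
  "cayley_adj G S g h \<longleftrightarrow> g \<in> carrier G \<and> h \<in> carrier G \<and> g \<noteq> h \<and>
     (\<exists>s\<in>S. h = g \<otimes>\<^bsub>G\<^esub> s \<or> g = h \<otimes>\<^bsub>G\<^esub> s)"

text \<open>Vertices V \<union> W: group elements (Inl g) and cosets g P_lambda, tagged by lambda.\<close>
type_synonym ('a, 'i) cvert = "'a + ('i \<times> 'a set)"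

definition coned_verts :: "('a, 'b) monoid_scheme \<Rightarrow> 'i set \<Rightarrow> ('i \<Rightarrow> 'a set) \<Rightarrow> ('a, 'i) cvert set" where
  "coned_verts G \<Lambda> P = Inl ` carrier G \<union>
     {Inr (l, g <#\<^bsub>G\<^esub> P l) | l g. l \<in> \<Lambda> \<and> g \<in> carrier G}"

definition coned_adj :: "('a, 'b) monoid_scheme \<Rightarrow> 'a set \<Rightarrow> 'i set \<Rightarrow> ('i \<Rightarrow> 'a set)
    \<Rightarrow> ('a, 'i) cvert \<Rightarrow> ('a, 'i) cvert \<Rightarrow> bool" where
  "coned_adj G S \<Lambda> P u v \<longleftrightarrow> u \<in> coned_verts G \<Lambda> P \<and> v \<in> coned_verts G \<Lambda> P \<and>
     (case (u, v) of
        (Inl g, Inl h) \<Rightarrow> cayley_adj G S g h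
      | (Inl g, Inr (l, C)) \<Rightarrow> g \<in> C
      | (Inr (l, C), Inl g) \<Rightarrow> g \<in> C
      | (Inr _, Inr _) \<Rightarrow> False)"

definition rel_hyperbolic :: "('a, 'b) monoid_scheme \<Rightarrow> 'a set \<Rightarrow> 'i set \<Rightarrow> ('i \<Rightarrow> 'a set) \<Rightarrow> bool" where
  "rel_hyperbolic G S \<Lambda> P \<longleftrightarrow>
     fine_graph (coned_verts G \<Lambda> P) (coned_adj G S \<Lambda> P) \<and>
     (\<exists>\<delta>. hyperbolic_graph (coned_verts G \<Lambda> P) (coned_adj G S \<Lambda> P) \<delta>)"

definition word_dist :: "('a, 'b) monoid_scheme \<Rightarrow> 'a set \<Rightarrow> 'a \<Rightarrow> 'a \<Rightarrow> nat" where
  "word_dist G S = gdist (carrier G) (cayley_adj G S)"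

definition vset :: "('a, 'i) cvert \<Rightarrow> 'a set" where
  "vset u = (case u of Inl g \<Rightarrow> {g} | Inr (l, C) \<Rightarrow> C)"

definition ext_dist :: "('a, 'b) monoid_scheme \<Rightarrow> 'a set \<Rightarrow> ('a, 'i) cvert \<Rightarrow> ('a, 'i) cvert \<Rightarrow> nat" where
  "ext_dist G S u v = Inf {word_dist G S a b | a b. a \<in> vset u \<and> b \<in> vset v}"

definition rips_adj :: "('a, 'b) monoid_scheme \<Rightarrow> 'a set \<Rightarrow> 'i set \<Rightarrow> ('i \<Rightarrow> 'a set) \<Rightarrow> nat
    \<Rightarrow> ('a, 'i) cvert \<Rightarrow> ('a, 'i) cvert \<Rightarrow> bool" where
  "rips_adj G S \<Lambda> P n u v \<longleftrightarrow> u \<in> coned_verts G \<Lambda> P \<and> v \<in> coned_verts G \<Lambda> P \<and> u \<noteq> v \<and>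
     ext_dist G S u v \<le> n"

definition rips_simplex :: "('a, 'b) monoid_scheme \<Rightarrow> 'a set \<Rightarrow> 'i set \<Rightarrow> ('i \<Rightarrow> 'a set) \<Rightarrow> nat
    \<Rightarrow> ('a, 'i) cvert set \<Rightarrow> bool" where
  "rips_simplex G S \<Lambda> P n \<sigma> \<longleftrightarrow> finite \<sigma> \<and> \<sigma> \<noteq> {} \<and> \<sigma> \<subseteq> coned_verts G \<Lambda> P \<and>
     (\<forall>u\<in>\<sigma>. \<forall>v\<in>\<sigma>. u \<noteq> v \<longrightarrow> rips_adj G S \<Lambda> P n u v)"

section \<open>Geometric realisation: points as barycentric coordinate functions\<close>

definition vact :: "('a, 'b) monoid_scheme \<Rightarrow> 'a \<Rightarrow> ('a, 'i) cvert \<Rightarrow> ('a, 'i) cvert" where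
  "vact G g u = (case u of Inl h \<Rightarrow> Inl (g \<otimes>\<^bsub>G\<^esub> h) | Inr (l, C) \<Rightarrow> Inr (l, g <#\<^bsub>G\<^esub> C))"

definition pact :: "('a, 'b) monoid_scheme \<Rightarrow> 'a \<Rightarrow> (('a, 'i) cvert \<Rightarrow> real) \<Rightarrow> (('a, 'i) cvert \<Rightarrow> real)" where
  "pact G g p = (\<lambda>u. p (vact G (inv\<^bsub>G\<^esub> g) u))"

definition barycentre :: "('a, 'i) cvert set \<Rightarrow> (('a, 'i) cvert \<Rightarrow> real)" where
  "barycentre \<sigma> = (\<lambda>u. if u \<in> \<sigma> then 1 / real (card \<sigma>) else 0)"

definition point_stabiliser :: "('a, 'b) monoid_scheme \<Rightarrow> (('a, 'i) cvert \<Rightarrow> real) \<Rightarrow> 'a set" where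
  "point_stabiliser G p = {g \<in> carrier G. pact G g p = p}"

end

theory Submission
  imports Defs
begin


lemma walk_succ: "walk adj xs \<longleftrightarrow> xs \<noteq> [] \<and> successively adj xs"
  unfolding walk_def successively_conv_nth by auto

lemma walk_append_tl:
  assumes "walk adj xs" "walk adj ys" "last xs = hd ys"
  shows "walk adj (xs @ tl ys)" "last (xs @ tl ys) = last ys" "hd (xs @ tl ys) = hd xs"
proof -
  obtain y ys' where ys: "ys = y # ys'" using assms(2) unfolding walk_def by (cases ys) auto
  show "walk adj (xs @ tl ys)" using assms ys
    by (cases ys') (auto simp: walk_succ successively_append_iff successively_Cons)
  show "last (xs @ tl ys) = last ys" using assms ys by (cases ys') auto
  show "hd (xs @ tl ys) = hd xs" using assms(1) unfolding walk_def by simp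
qed

lemma walk_rev:
  assumes "walk adj xs" "\<And>x y. adj x y \<Longrightarrow> adj y x"
  shows "walk adj (rev xs)"
  using assms unfolding walk_succ
  by (auto elim: successively_mono)

lemma walk_map:
  assumes "walk adj xs" "\<And>x y. x \<in> set xs \<Longrightarrow> y \<in> set xs \<Longrightarrow> adj x y \<Longrightarrow> adj' (f x) (f y)"
  shows "walk adj' (map f xs)"
  using assms unfolding walk_succ successively_map
  by (auto elim: successively_mono)

lemma walk_take:
  assumes "walk adj xs" "0 < j"
  shows "walk adj (take j xs)"
  using assms unfolding walk_def by auto

lemma walk_to_path:
  assumes "walk adj xs"
  shows "\<exists>ys. walk adj ys \<and> distinct ys \<and> set ys \<subseteq> set xs \<and> hd ys = hd xs \<and> last ys = last xs
           \<and> length ys \<le> length xs"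
  using assms
proof (induction xs rule: length_induct)
  case (1 ws)
  show ?case
  proof (cases "distinct ws")
    case True then show ?thesis using 1 by blast
  next
    case False
    then obtain xs ys zs y where ws: "ws = xs@[y]@ys@[y]@zs" using not_distinct_decomp by blast
    let ?v = "xs @ [y] @ zs"
    have "walk adj ?v" using "1.prems" unfolding ws walk_succ
      by (auto simp: successively_append_iff successively_Cons)
    moreover have "length ?v < length ws" using ws by simp
    ultimately obtain us where "walk adj us \<and> distinct us \<and> set us \<subseteq> set ?v \<and> hd us = hd ?v
       \<and> last us = last ?v \<and> length us \<le> length ?v" using 1 by blast
    moreover have "hd ?v = hd ws" "last ?v = last ws" "set ?v \<subseteq> set ws" using ws
      by (cases xs; auto)+
    ultimately show ?thesis using \<open>length ?v < length ws\<close> by (metis order.trans less_imp_le)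
  qed
qed




context
  fixes G :: "('a, 'b) monoid_scheme" and S :: "'a set" and \<Lambda> :: "'i set" and P :: "'i \<Rightarrow> 'a set"
  assumes grp: "group G" and SG: "S \<subseteq> carrier G" and sub: "\<And>l. l \<in> \<Lambda> \<Longrightarrow> subgroup (P l) G"
begin

lemma Inr_verts: "Inr (l, C) \<in> coned_verts G \<Lambda> P \<Longrightarrow> \<exists>g\<in>carrier G. l \<in> \<Lambda> \<and> C = g <#\<^bsub>G\<^esub> P l"
  unfolding coned_verts_def by auto

lemma Inr_sub: "Inr (l, C) \<in> coned_verts G \<Lambda> P \<Longrightarrow> C \<subseteq> carrier G"
  using Inr_verts grp sub by (metis group.l_coset_subset_G subgroup.subset)

lemma vact_closed: "g \<in> carrier G \<Longrightarrow> u \<in> coned_verts G \<Lambda> P \<Longrightarrow> vact G g u \<in> coned_verts G \<Lambda> P"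
proof (cases u)
  case (Inl h)
  assume "g \<in> carrier G" "u \<in> coned_verts G \<Lambda> P"
  then show ?thesis using Inl grp unfolding coned_verts_def vact_def by (auto simp: group.is_monoid monoid.m_closed)
next
  case (Inr lC)
  then obtain l C where u: "u = Inr (l, C)" by (cases lC) auto
  assume a: "g \<in> carrier G" "u \<in> coned_verts G \<Lambda> P"
  then obtain h where h: "h \<in> carrier G" "l \<in> \<Lambda>" "C = h <#\<^bsub>G\<^esub> P l" using Inr_verts u by blast
  have "g <#\<^bsub>G\<^esub> C = (g \<otimes>\<^bsub>G\<^esub> h) <#\<^bsub>G\<^esub> P l"
    using h a grp sub by (simp add: group.lcos_m_assoc subgroup.subset)
  then show ?thesis using u h a grp unfolding coned_verts_def vact_def
    by (auto intro!: exI[of _ "g \<otimes>\<^bsub>G\<^esub> h"] monoid.m_closed group.is_monoid)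
qed

lemma vact_mult: "g \<in> carrier G \<Longrightarrow> h \<in> carrier G \<Longrightarrow> u \<in> coned_verts G \<Lambda> P \<Longrightarrow>
   vact G g (vact G h u) = vact G (g \<otimes>\<^bsub>G\<^esub> h) u"
proof (cases u)
  case (Inl x)
  assume "g \<in> carrier G" "h \<in> carrier G" "u \<in> coned_verts G \<Lambda> P"
  then show ?thesis using Inl grp unfolding coned_verts_def vact_def by (auto simp: group.is_monoid monoid.m_assoc)
next
  case (Inr lC)
  then obtain l C where u: "u = Inr (l, C)" by (cases lC) auto
  assume a: "g \<in> carrier G" "h \<in> carrier G" "u \<in> coned_verts G \<Lambda> P"
  then have "C \<subseteq> carrier G" using Inr_sub u by blast
  then show ?thesis using u a grp unfolding vact_def by (simp add: group.lcos_m_assoc)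
qed

lemma vact_one: "u \<in> coned_verts G \<Lambda> P \<Longrightarrow> vact G \<one>\<^bsub>G\<^esub> u = u"
proof (cases u)
  case (Inl x)
  assume "u \<in> coned_verts G \<Lambda> P"
  then show ?thesis using Inl grp unfolding coned_verts_def vact_def by (auto simp: group.is_monoid)
next
  case (Inr lC)
  then obtain l C where u: "u = Inr (l, C)" by (cases lC) auto
  assume a: "u \<in> coned_verts G \<Lambda> P"
  then have "C \<subseteq> carrier G" using Inr_sub u by blast
  then show ?thesis using u a grp unfolding vact_def by (simp add: group.lcos_mult_one)
qed

lemma vact_inv: "g \<in> carrier G \<Longrightarrow> u \<in> coned_verts G \<Lambda> P \<Longrightarrow> vact G (inv\<^bsub>G\<^esub> g) (vact G g u) = u"
  using grp by (simp add: vact_mult vact_one group.l_inv)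

lemma cayley_sym: "cayley_adj G S g h \<Longrightarrow> cayley_adj G S h g"
  unfolding cayley_adj_def by blast

lemma coned_adj_sym: "coned_adj G S \<Lambda> P u v \<Longrightarrow> coned_adj G S \<Lambda> P v u"
  unfolding coned_adj_def by (auto split: sum.splits prod.splits intro: cayley_sym)

lemma coned_adj_vact:
  assumes k: "k \<in> carrier G" and adj: "coned_adj G S \<Lambda> P u v"
  shows "coned_adj G S \<Lambda> P (vact G k u) (vact G k v)"
proof -
  have uv: "u \<in> coned_verts G \<Lambda> P" "v \<in> coned_verts G \<Lambda> P" using adj unfolding coned_adj_def by auto
  have ca: "cayley_adj G S (k \<otimes>\<^bsub>G\<^esub> g) (k \<otimes>\<^bsub>G\<^esub> h)" if "cayley_adj G S g h" for g h
  proof -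
    interpret group G by (rule grp)
    show ?thesis using that k SG unfolding cayley_adj_def
      by (auto simp: m_assoc) (metis m_assoc subsetD)+
  qed
  have lc: "k \<otimes>\<^bsub>G\<^esub> g \<in> k <#\<^bsub>G\<^esub> C" if "g \<in> C" for g C
    using that unfolding l_coset_def by auto
  show ?thesis using adj uv vact_closed[OF k] unfolding coned_adj_def
    by (auto simp: vact_def split: sum.splits prod.splits intro: ca lc)
qed

end



context
  fixes G :: "('a, 'b) monoid_scheme" and S :: "'a set" and \<Lambda> :: "'i set" and P :: "'i \<Rightarrow> 'a set"
  assumes grp: "group G" and SG: "S \<subseteq> carrier G" and sub: "\<And>l. l \<in> \<Lambda> \<Longrightarrow> subgroup (P l) G"
begin

abbreviation "V \<equiv> coned_verts G \<Lambda> P"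
abbreviation "adj \<equiv> coned_adj G S \<Lambda> P"

lemma vinv: "g \<in> carrier G \<Longrightarrow> u \<in> V \<Longrightarrow> vact G (inv\<^bsub>G\<^esub> g) (vact G g u) = u"
  by (rule vact_inv[of G S \<Lambda> P]) (use grp SG sub in auto)
lemma vcl: "g \<in> carrier G \<Longrightarrow> u \<in> V \<Longrightarrow> vact G g u \<in> V"
  by (rule vact_closed[of G S \<Lambda> P]) (use grp SG sub in auto)
lemma cadj: "k \<in> carrier G \<Longrightarrow> adj u v \<Longrightarrow> adj (vact G k u) (vact G k v)"
  by (rule coned_adj_vact[of G S \<Lambda> P]) (use grp SG sub in auto)
lemma csym: "adj u v \<Longrightarrow> adj v u"
  by (rule coned_adj_sym[of G S \<Lambda> P]) (use grp SG sub in auto)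

lemma stab_Inl:
  assumes "u = Inl h" "u \<in> V" "k \<in> carrier G" "vact G k u = u"
  shows "k = \<one>\<^bsub>G\<^esub>"
proof -
  interpret group G by (rule grp)
  have "h \<in> carrier G" using assms unfolding coned_verts_def by auto
  then show ?thesis using assms unfolding vact_def by simp
qed

lemma stab_Inr:
  assumes u: "u = Inr (l, C)" "u \<in> V" and v: "v \<in> V" "u \<noteq> v"
    and fine: "fine_graph V adj" and conn: "graph_connected V adj"
  shows "finite {k\<in>carrier G. vact G k u = u \<and> vact G k v = v}"
proof -
  interpret group G by (rule grp)
  obtain w where w: "walk adj w" "set w \<subseteq> V" "hd w = v" "last w = u"
    using conn u v unfolding graph_connected_def by blast
  have wne: "w \<noteq> []" using w unfolding walk_def by auto
  have ex: "\<exists>j. j < length w \<and> w ! j = u"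
    using wne w(4) by (intro exI[of _ "length w - 1"]) (auto simp: last_conv_nth)
  define j where "j = (LEAST j. j < length w \<and> w ! j = u)"
  have j: "j < length w" "w ! j = u" using LeastI_ex[OF ex] unfolding j_def by auto
  have jmin: "w ! i \<noteq> u" if "i < j" for i
  proof
    assume "w ! i = u"
    then have "i < length w \<and> w ! i = u" using that j(1) by simp
    then have "j \<le> i" unfolding j_def by (rule Least_le)
    then show False using that by simp
  qed
  have j0: "j \<noteq> 0" using j w(3) wne v(2) by (metis hd_conv_nth)
  define p where "p = take j w"
  have p: "walk adj p" "set p \<subseteq> V - {u}" "hd p = v" "length p = j"
  proof -
    show "walk adj p" unfolding p_def using walk_take[OF w(1)] j0 by simp
    show "set p \<subseteq> V - {u}" unfolding p_def using w(2) jmin j(1)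
      by (auto simp: in_set_conv_nth) (meson nth_mem order.strict_trans subsetD, blast)
    show "hd p = v" unfolding p_def using w(3) j0 wne by simp
    show "length p = j" unfolding p_def using j by simp
  qed
  have lastp: "last p = w ! (j - 1)" using j j0 p(4) unfolding p_def by (subst last_conv_nth) auto
  have "adj (w ! (j - 1)) u" using w(1) j j0 unfolding walk_def
    by (metis Suc_pred' bot_nat_0.not_eq_extremum)
  then obtain a where a: "last p = Inl a" "a \<in> C"
    using lastp u unfolding coned_adj_def by (auto split: sum.splits prod.splits)
  have aV: "Inl a \<in> V" using a p(1,2) unfolding walk_def
    by (metis Diff_iff last_in_set list.size(3) p(4) j0 subsetD)
  then have aG: "a \<in> carrier G" unfolding coned_verts_def by auto
  have adjua: "adj u (Inl a)" using aV u a unfolding coned_adj_def by auto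
  define L where "L = 2 * j + 1"
  define Circ where "Circ = (\<Union>m\<in>{..L}. {xs. set xs \<subseteq> V \<and> circuit adj xs \<and> length xs = m
          \<and> edge_in_circuit u (Inl a) xs})"
  have fC: "finite Circ" unfolding Circ_def using fine adjua u(2) aV unfolding fine_graph_def by blast
  define B where "B = \<Union> (set ` Circ)"
  have fB: "finite B" unfolding B_def using fC by blast
  have key: "Inl (k \<otimes>\<^bsub>G\<^esub> a) \<in> B" if k: "k \<in> carrier G" "vact G k u = u" "vact G k v = v" "k \<noteq> \<one>\<^bsub>G\<^esub>" for k
  proof -
    have kC: "k <#\<^bsub>G\<^esub> C = C" using k(2) u(1) unfolding vact_def by simp
    have kaC: "k \<otimes>\<^bsub>G\<^esub> a \<in> C" using kC a(2) unfolding l_coset_def by blast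
    have kaa: "k \<otimes>\<^bsub>G\<^esub> a \<noteq> a" using k aG by simp
    define q where "q = map (vact G k) p"
    have pV: "set p \<subseteq> V" using p(2) by blast
    have q: "walk adj q" "set q \<subseteq> V - {u}" "hd q = v" "last q = Inl (k \<otimes>\<^bsub>G\<^esub> a)"
    proof -
      show "walk adj q" unfolding q_def using p(1) by (rule walk_map) (rule cadj[OF k(1)])
      show "set q \<subseteq> V - {u}"
      proof
        fix x assume "x \<in> set q"
        then obtain y where y: "y \<in> set p" "x = vact G k y" unfolding q_def by auto
        have yV: "y \<in> V" "y \<noteq> u" using y p(2) by auto
        have "x \<in> V" using y yV vcl[OF k(1)] by simp
        moreover have "x \<noteq> u"
        proof
          assume "x = u"
          then have "vact G (inv\<^bsub>G\<^esub> k) x = vact G (inv\<^bsub>G\<^esub> k) (vact G k u)" using k(2) by simp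
          then have "y = u" using vinv[OF k(1)] yV(1) u(2) y(2) by simp
          then show False using yV by simp
        qed
        ultimately show "x \<in> V - {u}" by simp
      qed
      have pne: "p \<noteq> []" using p(1) unfolding walk_def by simp
      show "hd q = v" unfolding q_def using pne p(3) k(3) by (simp add: hd_map)
      show "last q = Inl (k \<otimes>\<^bsub>G\<^esub> a)" unfolding q_def using pne a(1) by (simp add: last_map vact_def)
    qed
    define r where "r = rev p @ tl q"
    have rp: "walk adj (rev p)" using p(1) walk_rev csym by blast
    have lr: "last (rev p) = hd q" using p(1) q(3) p(3) unfolding walk_def by (simp add: last_rev)
    have r: "walk adj r" "last r = Inl (k \<otimes>\<^bsub>G\<^esub> a)" "hd r = Inl a" "set r \<subseteq> V - {u}" "length r \<le> 2 * j"
    proof -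
      show "walk adj r" "last r = Inl (k \<otimes>\<^bsub>G\<^esub> a)" using walk_append_tl[OF rp q(1) lr] q(4) unfolding r_def by auto
      show "hd r = Inl a" using walk_append_tl[OF rp q(1) lr] a(1) p(1) unfolding r_def walk_def
        by (simp add: hd_rev)
      show "set r \<subseteq> V - {u}" unfolding r_def using p(2) q(2) by (cases q) auto
      have "length q = j" unfolding q_def using p(4) by simp
      then show "length r \<le> 2 * j" unfolding r_def using p(4) by simp
    qed
    obtain ys where ys: "walk adj ys" "distinct ys" "set ys \<subseteq> set r" "hd ys = Inl a"
       "last ys = Inl (k \<otimes>\<^bsub>G\<^esub> a)" "length ys \<le> length r"
      using walk_to_path[OF r(1)] r by auto
    have ysne: "ys \<noteq> []" using ys(1) unfolding walk_def by simp
    have len2: "length ys \<ge> 2"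
    proof (rule ccontr)
      assume "\<not> 2 \<le> length ys"
      then have "length ys = 1" using ysne by (cases ys) (auto simp: Suc_le_eq)
      then have "hd ys = last ys" by (cases ys) auto
      then show False using ys(4,5) kaa by simp
    qed
    define c where "c = u # ys"
    have ysV: "set ys \<subseteq> V - {u}" using ys(3) r(4) by (rule order.trans)
    have lys: "last ys \<in> set ys" using ysne by simp
    have kaV: "Inl (k \<otimes>\<^bsub>G\<^esub> a) \<in> V" using ysV ys(5) lys by auto
    have adjku: "adj (Inl (k \<otimes>\<^bsub>G\<^esub> a)) u" using kaV u kaC unfolding coned_adj_def by auto
    have cw: "walk adj c" unfolding c_def using ys(1) adjua ys(4) ysne
      by (cases ys) (auto simp: walk_succ)
    have uys: "u \<notin> set ys" using ysV by blast
    have lc: "last c = Inl (k \<otimes>\<^bsub>G\<^esub> a)" "hd c = u" "length c \<ge> 3" "distinct c" "c \<noteq> []"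
      unfolding c_def using ys(5) ysne len2 uys ys(2) by auto
    have cc: "circuit adj c" unfolding circuit_def using lc cw adjku by simp
    have ce: "edge_in_circuit u (Inl a) c" unfolding edge_in_circuit_def
    proof (intro exI[of _ 0] conjI)
      show "0 < length c" using lc by simp
      have "c ! Suc 0 = Inl a" unfolding c_def using ys(4) ysne by (simp add: hd_conv_nth)
      moreover have "Suc 0 mod length c = Suc 0" using lc by simp
      ultimately show "{c ! 0, c ! (Suc 0 mod length c)} = {u, Inl a}" unfolding c_def by simp
    qed
    have cl: "length c \<le> L" unfolding c_def L_def using ys(6) r(5) by simp
    have cV: "set c \<subseteq> V" unfolding c_def using ysV u(2) by auto
    have "c \<in> Circ" unfolding Circ_def using cc ce cl cV by auto
    moreover have "Inl (k \<otimes>\<^bsub>G\<^esub> a) \<in> set c" unfolding c_def using ys(5) ysne last_in_set by fastforce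
    ultimately show ?thesis unfolding B_def by blast
  qed
  have "inj_on (\<lambda>k. Inl (k \<otimes>\<^bsub>G\<^esub> a)) (carrier G)" using aG by (auto simp: inj_on_def)
  then have "finite {k\<in>carrier G. Inl (k \<otimes>\<^bsub>G\<^esub> a) \<in> B}"
    by (rule inj_on_finite[OF inj_on_subset, where B = B]) (use fB in auto)
  then show ?thesis
    by (rule finite_subset[rotated, where B = "insert \<one>\<^bsub>G\<^esub> {k\<in>carrier G. Inl (k \<otimes>\<^bsub>G\<^esub> a) \<in> B}", 
          OF finite_insert[THEN iffD2]]) (use key in auto)
qed

end



context
  fixes G :: "('a, 'b) monoid_scheme" and S :: "'a set" and \<Lambda> :: "'i set" and P :: "'i \<Rightarrow> 'a set"
  assumes grp: "group G" and SG: "S \<subseteq> carrier G" and sub: "\<And>l. l \<in> \<Lambda> \<Longrightarrow> subgroup (P l) G"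
begin

lemma vmult: "g \<in> carrier G \<Longrightarrow> h \<in> carrier G \<Longrightarrow> u \<in> coned_verts G \<Lambda> P \<Longrightarrow>
   vact G g (vact G h u) = vact G (g \<otimes>\<^bsub>G\<^esub> h) u"
  by (rule vact_mult[of G S \<Lambda> P]) (use grp SG sub in auto)
lemma vone: "u \<in> coned_verts G \<Lambda> P \<Longrightarrow> vact G \<one>\<^bsub>G\<^esub> u = u"
  by (rule vact_one[of G S \<Lambda> P]) (use grp SG sub in auto)

lemma pair_stab:
  assumes "u \<in> coned_verts G \<Lambda> P" "v \<in> coned_verts G \<Lambda> P" "u \<noteq> v"
    and fine: "fine_graph (coned_verts G \<Lambda> P) (coned_adj G S \<Lambda> P)"
    and conn: "graph_connected (coned_verts G \<Lambda> P) (coned_adj G S \<Lambda> P)"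
  shows "finite {k\<in>carrier G. vact G k u = u \<and> vact G k v = v}"
proof (cases u)
  case (Inl h)
  have "k = \<one>\<^bsub>G\<^esub>" if "k \<in> carrier G" "vact G k u = u" for k
    apply (rule stab_Inl[of G S \<Lambda> P u h k])
    apply (rule grp) apply (rule SG) apply (erule sub) apply (rule Inl) apply (rule assms(1))
    apply (rule that(1)) apply (rule that(2)) done
  then have "{k\<in>carrier G. vact G k u = u \<and> vact G k v = v} \<subseteq> {\<one>\<^bsub>G\<^esub>}" by blast
  then show ?thesis using finite_subset by blast
next
  case (Inr lC)
  then obtain l C where u: "u = Inr (l, C)" by (cases lC) auto
  show ?thesis
    apply (rule stab_Inr[of G S \<Lambda> P u l C v])
    apply (rule grp) apply (rule SG) apply (erule sub) apply (rule u) apply (rule assms(1))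
    apply (rule assms(2)) apply (rule assms(3)) apply (rule fine) apply (rule conn) done
qed

lemma main:
  assumes fine: "fine_graph (coned_verts G \<Lambda> P) (coned_adj G S \<Lambda> P)"
    and conn: "graph_connected (coned_verts G \<Lambda> P) (coned_adj G S \<Lambda> P)"
    and sig: "rips_simplex G S \<Lambda> P n \<sigma>" "card \<sigma> \<ge> 2"
  shows "finite (point_stabiliser G (barycentre \<sigma>))"
proof -
  interpret group G by (rule grp)
  have fs: "finite \<sigma>" and sV: "\<sigma> \<subseteq> coned_verts G \<Lambda> P" using sig unfolding rips_simplex_def by auto
  obtain u v where uv: "u \<in> \<sigma>" "v \<in> \<sigma>" "u \<noteq> v"
  proof -
    have "\<not> card \<sigma> \<le> Suc 0" using sig by simp
    then have "\<exists>a1\<in>\<sigma>. \<exists>a2\<in>\<sigma>. a1 \<noteq> a2" using card_le_Suc0_iff_eq[OF fs] by blast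
    then show ?thesis using that by blast
  qed
  have uV: "u \<in> coned_verts G \<Lambda> P" "v \<in> coned_verts G \<Lambda> P" using uv sV by auto
  define K where "K = {k\<in>carrier G. vact G k u = u \<and> vact G k v = v}"
  have fK: "finite K" unfolding K_def by (rule pair_stab[OF uV uv(3) fine conn])
  define H where "H = point_stabiliser G (barycentre \<sigma>)"
  have cpos: "1 / real (card \<sigma>) \<noteq> 0" using sig by simp
  have Hin: "vact G (inv\<^bsub>G\<^esub> g) x \<in> \<sigma>" if "g \<in> H" "x \<in> \<sigma>" for g x
  proof -
    have "pact G g (barycentre \<sigma>) x = barycentre \<sigma> x" using that(1) unfolding H_def point_stabiliser_def by auto
    then show ?thesis using that(2) cpos unfolding pact_def barycentre_def by (auto split: if_splits)
  qed
  have HG: "H \<subseteq> carrier G" unfolding H_def point_stabiliser_def by auto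
  define f where "f = (\<lambda>g. (vact G (inv\<^bsub>G\<^esub> g) u, vact G (inv\<^bsub>G\<^esub> g) v))"
  have bk: "vact G g (vact G (inv\<^bsub>G\<^esub> g0) x) = vact G (g \<otimes>\<^bsub>G\<^esub> inv\<^bsub>G\<^esub> g0) x"
    if "g \<in> carrier G" "g0 \<in> carrier G" "x \<in> coned_verts G \<Lambda> P" for g g0 x
    using vmult that by simp
  have fib: "finite {g\<in>H. f g = q}" for q
  proof (cases "{g\<in>H. f g = q} = {}")
    case True then show ?thesis by (simp only: finite.emptyI)
  next
    case False
    then obtain g0 where g0: "g0 \<in> H" "f g0 = q" by blast
    have g0G: "g0 \<in> carrier G" using g0 HG by blast
    have "{g\<in>H. f g = q} \<subseteq> (\<lambda>k. k \<otimes>\<^bsub>G\<^esub> g0) ` K"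
    proof
      fix g assume g: "g \<in> {g\<in>H. f g = q}"
      then have gG: "g \<in> carrier G" using HG by blast
      have e: "vact G (inv\<^bsub>G\<^esub> g) u = vact G (inv\<^bsub>G\<^esub> g0) u" "vact G (inv\<^bsub>G\<^esub> g) v = vact G (inv\<^bsub>G\<^esub> g0) v"
        using g g0 unfolding f_def by auto
      have "vact G (g \<otimes>\<^bsub>G\<^esub> inv\<^bsub>G\<^esub> g0) x = x" if "x \<in> coned_verts G \<Lambda> P"
         "vact G (inv\<^bsub>G\<^esub> g) x = vact G (inv\<^bsub>G\<^esub> g0) x" for x
      proof -
        have "vact G g (vact G (inv\<^bsub>G\<^esub> g) x) = x"
          using vmult[OF gG inv_closed[OF gG] that(1)] vone[OF that(1)] gG by simp
        then have "x = vact G g (vact G (inv\<^bsub>G\<^esub> g0) x)" using that(2) by simp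
        also have "\<dots> = vact G (g \<otimes>\<^bsub>G\<^esub> inv\<^bsub>G\<^esub> g0) x" using that(1) bk gG g0G by simp
        finally show ?thesis by simp
      qed
      then have "g \<otimes>\<^bsub>G\<^esub> inv\<^bsub>G\<^esub> g0 \<in> K" unfolding K_def using e uV gG g0G by auto
      moreover have "g = (g \<otimes>\<^bsub>G\<^esub> inv\<^bsub>G\<^esub> g0) \<otimes>\<^bsub>G\<^esub> g0" using gG g0G by (simp add: m_assoc)
      ultimately show "g \<in> (\<lambda>k. k \<otimes>\<^bsub>G\<^esub> g0) ` K" by blast
    qed
    then show ?thesis using fK finite_subset by blast
  qed
  have "H \<subseteq> (\<Union>q\<in>\<sigma> \<times> \<sigma>. {g\<in>H. f g = q})" using Hin uv unfolding f_def by auto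
  moreover have "finite (\<Union>q\<in>\<sigma> \<times> \<sigma>. {g\<in>H. f g = q})" using fs fib by blast
  ultimately show ?thesis unfolding H_def[symmetric] using finite_subset by blast
qed

end



theorem corollary2p3:
  fixes G :: "('a, 'b) monoid_scheme" and S :: "'a set"
    and \<Lambda> :: "'i set" and P :: "'i \<Rightarrow> 'a set" and n :: nat
  assumes "group G"
    and "finite S" and "S \<subseteq> carrier G" and "generate G S = carrier G"
    and "finite \<Lambda>" and "\<And>l. l \<in> \<Lambda> \<Longrightarrow> subgroup (P l) G"
    and "rel_hyperbolic G S \<Lambda> P"
    and "n \<ge> 1"
  shows "\<forall>\<sigma>. rips_simplex G S \<Lambda> P n \<sigma> \<and> card \<sigma> \<ge> 2
            \<longrightarrow> finite (point_stabiliser G (barycentre \<sigma>))"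
proof (intro allI impI)
  fix \<sigma> assume s: "rips_simplex G S \<Lambda> P n \<sigma> \<and> card \<sigma> \<ge> 2"
  have fine: "fine_graph (coned_verts G \<Lambda> P) (coned_adj G S \<Lambda> P)"
    and conn: "graph_connected (coned_verts G \<Lambda> P) (coned_adj G S \<Lambda> P)"
    using assms(7) unfolding rel_hyperbolic_def hyperbolic_graph_def by blast+
  show "finite (point_stabiliser G (barycentre \<sigma>))"
    by (rule main[OF assms(1) assms(3) assms(6) fine conn]) (use s in auto)
qed

end
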